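(* Let $n\ge2$ and let $0\le x_1(0)\le\cdots\le x_n(0)\le1$ evolve under the static coverage control law. Then each $x_i(t)$ converges as $t\to\infty$ to a limit $\bar x_i$, and the limiting positions achieve optimal coverage: $\Phi(\bar x_1,\dots,\bar x_n,\rho)=\Phi^*$. Moreover, there is an absolute constant $C>0$ (independent of $n,\rho$, the initial positions and $\epsilon$) such that for every $\epsilon\in(0,1]$ and every $t\ge C\,n^2\log\!\big(\frac{n}{\epsilon}\frac{\rho_{\max}}{\rho_{\min}}\big)$, we have $|x_i(t)-\bar x_i|\le\epsilon$ for all $i$.
   Context: Let $\rho:[0,1]\to(0,\infty)$ be piecewise continuous with $\rho_{\min}\le\rho(z)\le\rho_{\max}$ for positive constants $\rho_{\min},\rho_{\max}$. For $a,b\in[0,1]$ let $d_\rho(a,b)=\int_{\min(a,b)}^{\max(a,b)}\rho(z)\,dz$, and $F(x)=\int_0^x\rho(z)\,dz$. The coverage of $x_1,\dots,x_n\in[0,1]$ is $\Phi(x_1,\dots,x_n,\rho)=\max_{y\in[0,1]}\min_i d_\rho(y,x_i)$ and $\Phi^*=\inf_{(x_1,\dots,x_n)\in[0,1]^n}\Phi(x_1,\dots,x_n,\rho)$. For $0\le a\le b\le1$ and $\alpha\ge0$, the $\alpha$-median $m^\alpha_\rho(a,b)$ is the unique $c\in[a,b]$ with $\int_a^c\rho(z)\,dz=\alpha\int_c^b\rho(z)\,dz$, equivalently $F(c)=\frac{F(a)+\alpha F(b)}{1+\alpha}$. The static coverage control law for $n\ge2$ agents is the iteration $x_1(t+1)=m^{1/2}_\rho(0,x_2(t))$,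 $x_i(t+1)=m^{1}_\rho(x_{i-1}(t),x_{i+1}(t))$ for $2\le i\le n-1$, $x_n(t+1)=m^{2}_\rho(x_{n-1}(t),1)$. *)

theory Defs
  imports "HOL-Analysis.Analysis"
begin

definition piecewise_continuous_on :: "real \<Rightarrow> real \<Rightarrow> (real \<Rightarrow> real) \<Rightarrow> bool" where
  "piecewise_continuous_on a b f \<longleftrightarrow>
     (\<exists>S. finite S \<and> continuous_on ({a..b} - S) f \<and>
        (\<forall>s\<in>S \<inter> {a..b}.
           (s < b \<longrightarrow> (\<exists>L. (f \<longlongrightarrow> L) (at_right s))) \<and>
           (a < s \<longrightarrow> (\<exists>L. (f \<longlongrightarrow> L) (at_left s)))))"

definition cumdens :: "(real \<Rightarrow> real) \<Rightarrow> real \<Rightarrow> real" where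
  "cumdens \<rho> x = integral {0..x} \<rho>"

definition dist_rho :: "(real \<Rightarrow> real) \<Rightarrow> real \<Rightarrow> real \<Rightarrow> real" where
  "dist_rho \<rho> a b = integral {min a b..max a b} \<rho>"

definition coverage :: "nat \<Rightarrow> (nat \<Rightarrow> real) \<Rightarrow> (real \<Rightarrow> real) \<Rightarrow> real" where
  "coverage n x \<rho> = (SUP y\<in>{0..1}. Min ((\<lambda>i. dist_rho \<rho> y (x i)) ` {1..n}))"

definition opt_coverage :: "nat \<Rightarrow> (real \<Rightarrow> real) \<Rightarrow> real" where
  "opt_coverage n \<rho> = (INF x\<in>{x. \<forall>i\<in>{1..n}. x i \<in> {0..1}}. coverage n x \<rho>)"

definition amedian :: "real \<Rightarrow> (real \<Rightarrow> real) \<Rightarrow> real \<Rightarrow> real \<Rightarrow> real" where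
  "amedian \<alpha> \<rho> a b = (THE c. c \<in> {a..b} \<and> integral {a..c} \<rho> = \<alpha> * integral {c..b} \<rho>)"

text \<open>Static coverage control law: x t i is the position of agent i at time t.\<close>
definition coverage_law :: "nat \<Rightarrow> (real \<Rightarrow> real) \<Rightarrow> (nat \<Rightarrow> nat \<Rightarrow> real) \<Rightarrow> bool" where
  "coverage_law n \<rho> x \<longleftrightarrow> (\<forall>t.
     x (Suc t) 1 = amedian (1/2) \<rho> 0 (x t 2) \<and>
     (\<forall>i. 2 \<le> i \<and> i \<le> n - 1 \<longrightarrow> x (Suc t) i = amedian 1 \<rho> (x t (i - 1)) (x t (i + 1))) \<and>
     x (Suc t) n = amedian 2 \<rho> (x t (n - 1)) 1)"

end

theory Submission
  imports Defs
begin


lemma pc_integrable: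
  fixes \<rho> :: "real \<Rightarrow> real"
  assumes pc: "piecewise_continuous_on 0 1 \<rho>" and b: "\<forall>z\<in>{0..1}. \<rho>min \<le> \<rho> z \<and> \<rho> z \<le> \<rho>max"
    and pos: "0 < \<rho>min"
  shows "\<rho> integrable_on {0..1}"
proof -
  obtain S where S: "finite S" "continuous_on ({0..1} - S) \<rho>"
    using pc unfolding piecewise_continuous_on_def by blast
  have T: "{0..1::real} - S \<in> sets lebesgue"
    using S(1) by (simp add: finite_imp_closed sets.Diff)
  have "\<rho> \<in> borel_measurable (lebesgue_on ({0..1} - S))"
    by (rule continuous_imp_measurable_on_sets_lebesgue[OF S(2) T])
  then have "\<rho> measurable_on ({0..1} - S)"
    using measurable_on_iff_borel_measurable[OF T] by blast
  moreover have "negligible ((({0..1} - S) - {0..1}) \<union> ({0..1} - ({0..1::real} - S)))"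
    by (rule negligible_subset[of S]) (auto simp: S(1) negligible_finite)
  ultimately have "\<rho> measurable_on {0..1}"
    by (rule measurable_on_spike_set)
  then have m: "\<rho> \<in> borel_measurable (lebesgue_on {0..1})"
    by (simp add: measurable_on_iff_borel_measurable)
  show ?thesis
    apply (rule measurable_bounded_by_integrable_imp_integrable[OF m, of "\<lambda>_. \<rho>max"])
     apply (rule integrable_const_ivl)
    subgoal for z using b pos by (smt (verit) real_norm_def)
    by simp
qed

locale dens =
  fixes \<rho> :: "real \<Rightarrow> real" and rmin rmax :: real
  assumes integ: "\<rho> integrable_on {0..1}"
    and bnd: "\<And>z. z \<in> {0..1} \<Longrightarrow> rmin \<le> \<rho> z \<and> \<rho> z \<le> rmax"
    and rmin_pos: "0 < rmin"
begin

abbreviation "F \<equiv> cumdens \<rho>"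

lemma rmin_le: "rmin \<le> rmax"
  using bnd[of 0] by auto

lemma integ_sub: "0 \<le> a \<Longrightarrow> b \<le> 1 \<Longrightarrow> \<rho> integrable_on {a..b}"
  by (rule integrable_subinterval_real[OF integ]) auto

lemma int_eq: assumes "0 \<le> a" "a \<le> b" "b \<le> 1"
  shows "integral {a..b} \<rho> = F b - F a"
proof -
  have "integral {0..a} \<rho> + integral {a..b} \<rho> = integral {0..b} \<rho>"
    by (rule Henstock_Kurzweil_Integration.integral_combine) (use assms integ_sub in auto)
  then show ?thesis unfolding cumdens_def by simp
qed

lemma int_bounds: assumes "0 \<le> a" "a \<le> b" "b \<le> 1"
  shows "rmin * (b - a) \<le> integral {a..b} \<rho>" "integral {a..b} \<rho> \<le> rmax * (b - a)"
proof -
  have i: "\<rho> integrable_on {a..b}" using integ_sub assms by auto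
  have "integral {a..b} (\<lambda>_. rmin) \<le> integral {a..b} \<rho>"
    by (rule integral_le[OF _ i]) (use bnd assms in auto)
  then show "rmin * (b - a) \<le> integral {a..b} \<rho>" using assms by (simp add: mult.commute)
  have "integral {a..b} \<rho> \<le> integral {a..b} (\<lambda>_. rmax)"
    by (rule integral_le[OF i]) (use bnd assms in auto)
  then show "integral {a..b} \<rho> \<le> rmax * (b - a)" using assms by (simp add: mult.commute)
qed

lemma F_bounds: assumes "0 \<le> a" "a \<le> b" "b \<le> 1"
  shows "rmin * (b - a) \<le> F b - F a" "F b - F a \<le> rmax * (b - a)"
  using int_bounds[OF assms] int_eq[OF assms] by auto

lemma F0: "F 0 = 0" unfolding cumdens_def by simp

lemma F_cont: "continuous_on {0..1} F"
  unfolding cumdens_def by (rule indefinite_integral_continuous_1[OF integ])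

lemma F_mono_iff: assumes "a \<in> {0..1}" "b \<in> {0..1}" shows "F a \<le> F b \<longleftrightarrow> a \<le> b"
proof
  assume "a \<le> b" then show "F a \<le> F b" using F_bounds(1)[of a b] assms rmin_pos
    by (smt (verit) atLeastAtMost_iff mult_nonneg_nonneg)
next
  assume h: "F a \<le> F b" show "a \<le> b"
  proof (rule ccontr)
    assume "\<not> a \<le> b"
    then have "rmin * (a - b) \<le> F a - F b" "0 < rmin * (a - b)" using F_bounds(1)[of b a] assms rmin_pos by auto
    then show False using h by linarith
  qed
qed

lemma F_range: "a \<in> {0..1} \<Longrightarrow> 0 \<le> F a \<and> F a \<le> F 1"
  using F_mono_iff[of 0 a] F_mono_iff[of a 1] F0 by auto

lemma F1_bounds: "rmin \<le> F 1" "F 1 \<le> rmax"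
  using F_bounds[of 0 1] F0 by auto

lemma F_ivt: assumes "0 \<le> a" "a \<le> b" "b \<le> 1" "F a \<le> v" "v \<le> F b"
  shows "\<exists>c. a \<le> c \<and> c \<le> b \<and> F c = v"
  by (rule IVT'[OF assms(4,5,2)]) (rule continuous_on_subset[OF F_cont], use assms in auto)

lemma x_diff: assumes "a \<in> {0..1}" "b \<in> {0..1}"
  shows "\<bar>a - b\<bar> \<le> \<bar>F a - F b\<bar> / rmin"
proof (cases "a \<le> b")
  case True
  then have "rmin * (b - a) \<le> F b - F a" using F_bounds assms by auto
  then show ?thesis using True rmin_pos by (simp add: field_simps)
next
  case False
  then have "rmin * (a - b) \<le> F a - F b" using F_bounds assms by auto
  then show ?thesis using False rmin_pos by (simp add: field_simps)
qed

lemma dist_rho_eq: assumes "a \<in> {0..1}" "b \<in> {0..1}"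
  shows "dist_rho \<rho> a b = \<bar>F a - F b\<bar>"
proof (cases "a \<le> b")
  case True
  then show ?thesis unfolding dist_rho_def using int_eq[of a b] assms F_mono_iff[of a b] by auto
next
  case False
  then show ?thesis unfolding dist_rho_def using int_eq[of b a] assms F_mono_iff[of b a] by auto
qed

lemma amedian_char: assumes "0 \<le> a" "a \<le> b" "b \<le> 1" "0 \<le> \<alpha>"
  shows "amedian \<alpha> \<rho> a b \<in> {a..b} \<and> F (amedian \<alpha> \<rho> a b) = (F a + \<alpha> * F b) / (1 + \<alpha>)"
proof -
  define v where "v = (F a + \<alpha> * F b) / (1 + \<alpha>)"
  have Fab: "F a \<le> F b" using F_mono_iff[of a b] assms by auto
  have "F a \<le> v" "v \<le> F b" unfolding v_def using Fab assms(4)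
    by (auto simp: field_simps intro: mult_left_mono)
  then obtain c where c: "a \<le> c" "c \<le> b" "F c = v" using F_ivt assms by blast
  have key: "\<And>d. a \<le> d \<Longrightarrow> d \<le> b \<Longrightarrow> (integral {a..d} \<rho> = \<alpha> * integral {d..b} \<rho>) \<longleftrightarrow> F d = v"
  proof -
    fix d assume d: "a \<le> d" "d \<le> b"
    have e1: "integral {a..d} \<rho> = F d - F a" and e2: "integral {d..b} \<rho> = F b - F d"
      using int_eq d assms by auto
    have ne: "1 + \<alpha> \<noteq> 0" using assms(4) by auto
    show "(integral {a..d} \<rho> = \<alpha> * integral {d..b} \<rho>) \<longleftrightarrow> F d = v"
      unfolding v_def e1 e2 using ne by (auto simp: field_simps algebra_simps)
  qed
  have "amedian \<alpha> \<rho> a b = c"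
    unfolding amedian_def
  proof (rule the_equality)
    show "c \<in> {a..b} \<and> integral {a..c} \<rho> = \<alpha> * integral {c..b} \<rho>" using c key by auto
  next
    fix d assume "d \<in> {a..b} \<and> integral {a..d} \<rho> = \<alpha> * integral {d..b} \<rho>"
    then have d: "a \<le> d" "d \<le> b" "F d = v" using key by auto
    then have "F d \<le> F c" "F c \<le> F d" using c by auto
    then show "d = c" using F_mono_iff[of d c] F_mono_iff[of c d] d c assms by auto
  qed
  then show ?thesis using c v_def by auto
qed

end




definition w :: "nat \<Rightarrow> nat \<Rightarrow> real" where
  "w n i = real n ^ 2 - (real i - (real n + 1) / 2) ^ 2"

lemma w_bounds: assumes "1 \<le> i" "i \<le> n"
  shows "3 / 4 * real n ^ 2 \<le> w n i" "w n i \<le> real n ^ 2"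
proof -
  have r: "1 \<le> real i" "real i \<le> real n" using assms by auto
  have "\<bar>real i - (real n + 1) / 2\<bar> \<le> real n / 2" using r by (simp add: abs_le_iff field_simps)
  then have "(real i - (real n + 1) / 2) ^ 2 \<le> (real n / 2) ^ 2"
    by (metis abs_ge_zero power2_abs power_mono)
  then show "3 / 4 * real n ^ 2 \<le> w n i" unfolding w_def by (simp add: power_divide)
  show "w n i \<le> real n ^ 2" unfolding w_def by simp
qed

lemma w_mid: "1 \<le> i \<Longrightarrow> (w n (i - 1) + w n (i + 1)) / 2 = w n i - 1"
  unfolding w_def by (simp add: of_nat_diff power2_eq_square field_simps)

lemma w_sym: "i \<le> n + 1 \<Longrightarrow> w n (n + 1 - i) = w n i"
  unfolding w_def by (simp add: of_nat_diff power2_eq_square field_simps)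

lemma w_end: assumes "2 \<le> n" shows "w n 2 / 3 \<le> (1 - 1 / real n ^ 2) * w n 1"
proof -
  define N where "N = real n"
  have N: "2 \<le> N" using assms N_def by auto
  have w2: "w n 2 \<le> N ^ 2" using w_bounds[of 2 n] assms N_def by auto
  have w1: "3 / 4 * N ^ 2 \<le> w n 1" using w_bounds[of 1 n] assms N_def by auto
  have "(2::real) ^ 2 \<le> N ^ 2" by (rule power_mono[OF N]) simp
  then have "1 / N ^ 2 \<le> 1 / 4" using N by (simp add: field_simps)
  then have l: "3 / 4 \<le> 1 - 1 / N ^ 2" by simp
  have "w n 2 / 3 \<le> N ^ 2 / 3" using w2 by simp
  also have "\<dots> \<le> 3 / 4 * (3 / 4 * N ^ 2)" by simp
  also have "\<dots> \<le> (1 - 1 / N ^ 2) * w n 1"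
    by (rule mult_mono[OF l w1]) (use l in auto)
  finally show ?thesis using N_def by simp
qed

lemma w_mid_contr: assumes "1 \<le> i" "i \<le> n" "2 \<le> n"
  shows "(w n (i - 1) + w n (i + 1)) / 2 \<le> (1 - 1 / real n ^ 2) * w n i"
proof -
  have np: "0 < real n ^ 2" using assms by simp
  have "w n i / real n ^ 2 \<le> 1" using w_bounds(2)[OF assms(1,2)] np by (simp add: field_simps)
  then show ?thesis using w_mid[OF assms(1), of n] by (simp add: algebra_simps)
qed




lemma chain_le:
  fixes f :: "nat \<Rightarrow> real"
  assumes "\<forall>i. 1 \<le> i \<and> i < n \<longrightarrow> f i \<le> f (i + 1)" "1 \<le> i" "i \<le> j" "j \<le> n"
  shows "f i \<le> f j"
  using assms(3,4)
proof (induction j)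
  case 0 then show ?case by simp
next
  case (Suc j)
  show ?case
  proof (cases "i = Suc j")
    case True then show ?thesis by simp
  next
    case False
    then have "i \<le> j" using Suc by simp
    then have "f i \<le> f j" using Suc by simp
    also have "f j \<le> f (j + 1)" using assms(1) assms(2) \<open>i \<le> j\<close> Suc by auto
    finally show ?thesis by simp
  qed
qed

definition upd :: "real \<Rightarrow> nat \<Rightarrow> (nat \<Rightarrow> real) \<Rightarrow> nat \<Rightarrow> real" where
  "upd L n v i = (if i = 1 then v 2 / 3 else if i = n then (v (n - 1) + 2 * L) / 3
                  else (v (i - 1) + v (i + 1)) / 2)"

lemma upd_mono:
  assumes n: "2 \<le> n" and r: "\<forall>i\<in>{1..n}. 0 \<le> v i \<and> v i \<le> L"
    and m: "\<forall>i. 1 \<le> i \<and> i < n \<longrightarrow> v i \<le> v (i + 1)" and i: "1 \<le> i" "i < n"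
  shows "upd L n v i \<le> upd L n v (i + 1)"
proof -
  consider "i = 1" "n = 2" | "i = 1" "n > 2" | "i > 1" "i + 1 = n" | "i > 1" "i + 1 < n"
    using n i by linarith
  then show ?thesis
  proof cases
    case 1
    then have "v 2 \<le> L" "0 \<le> v 1" "0 \<le> v 2" using r by auto
    then show ?thesis using 1 unfolding upd_def by simp
  next
    case 2
    then have "v 2 \<le> v 3" "0 \<le> v 1" "0 \<le> v 2" using r m[rule_format, of 2] by auto
    then show ?thesis using 2 unfolding upd_def by (simp add: numeral_3_eq_3)
  next
    case 3
    have a0: "1 \<le> i - 1 \<and> i - 1 < n" "i - 1 + 1 = i" using 3 by auto
    have a: "v (i - 1) \<le> v i" using m[rule_format, OF a0(1)] a0(2) by simp
    have b: "v (i + 1) \<le> L" using r 3 by auto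
    have c: "v i \<le> L" using r 3 by auto
    have "n - 1 = i" using 3 by simp
    then show ?thesis using 3 a b c unfolding upd_def by auto
  next
    case 4
    have a0: "1 \<le> i - 1 \<and> i - 1 < n" "i - 1 + 1 = i" using 4 by auto
    have a: "v (i - 1) \<le> v i" using m[rule_format, OF a0(1)] a0(2) by simp
    have b: "v (i + 1) \<le> v (i + 2)" using m[rule_format, of "i + 1"] 4 by auto
    have "i + 1 - 1 = i" "i + 1 + 1 = i + 2" by auto
    then show ?thesis using 4 a b unfolding upd_def by auto
  qed
qed

locale dyn = dens +
  fixes n :: nat and x :: "nat \<Rightarrow> nat \<Rightarrow> real"
  assumes n2: "2 \<le> n" and x01: "0 \<le> x 0 1"
    and x0m: "\<forall>i. 1 \<le> i \<and> i < n \<longrightarrow> x 0 i \<le> x 0 (i + 1)" and x0n: "x 0 n \<le> 1"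
    and law: "coverage_law n \<rho> x"
begin

definition inv where
  "inv t \<longleftrightarrow> (\<forall>i\<in>{1..n}. x t i \<in> {0..1}) \<and> (\<forall>i. 1 \<le> i \<and> i < n \<longrightarrow> x t i \<le> x t (i + 1))"

lemma inv0: "inv 0"
  unfolding inv_def
proof (intro conjI ballI)
  fix i assume i: "i \<in> {1..n}"
  have "x 0 1 \<le> x 0 i" by (rule chain_le[OF x0m]) (use i in auto)
  moreover have "x 0 i \<le> x 0 n" by (rule chain_le[OF x0m]) (use i in auto)
  ultimately show "x 0 i \<in> {0..1}" using x01 x0n by auto
qed (use x0m in auto)

lemma step:
  assumes "inv t"
  shows "\<forall>i\<in>{1..n}. x (Suc t) i \<in> {0..1} \<and> F (x (Suc t) i) = upd (F 1) n (\<lambda>i. F (x t i)) i"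
proof
  fix i assume i: "i \<in> {1..n}"
  have r: "\<And>j. j \<in> {1..n} \<Longrightarrow> 0 \<le> x t j \<and> x t j \<le> 1" using assms unfolding inv_def by auto
  have m: "\<And>j. 1 \<le> j \<Longrightarrow> j < n \<Longrightarrow> x t j \<le> x t (j + 1)" using assms unfolding inv_def by auto
  have L: "x (Suc t) 1 = amedian (1/2) \<rho> 0 (x t 2)"
    "\<And>i. 2 \<le> i \<Longrightarrow> i \<le> n - 1 \<Longrightarrow> x (Suc t) i = amedian 1 \<rho> (x t (i - 1)) (x t (i + 1))"
    "x (Suc t) n = amedian 2 \<rho> (x t (n - 1)) 1"
    using law unfolding coverage_law_def by auto
  consider "i = 1" | "i = n" | "2 \<le> i" "i \<le> n - 1" using i n2 by force
  then show "x (Suc t) i \<in> {0..1} \<and> F (x (Suc t) i) = upd (F 1) n (\<lambda>i. F (x t i)) i"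
  proof cases
    case 1
    have a: "0 \<le> x t 2" "x t 2 \<le> 1" using r[of 2] n2 by auto
    have "F 0 = 0" by (rule F0)
    then show ?thesis using amedian_char[of 0 "x t 2" "1/2"] a 1 L(1) unfolding upd_def by auto
  next
    case 2
    then have "i \<noteq> 1" using n2 by auto
    have a: "0 \<le> x t (n - 1)" "x t (n - 1) \<le> 1" using r[of "n - 1"] n2 by auto
    show ?thesis using amedian_char[of "x t (n - 1)" 1 2] a 2 L(3) \<open>i \<noteq> 1\<close> unfolding upd_def by auto
  next
    case 3
    have "i - 1 \<in> {1..n}" "i + 1 \<in> {1..n}" using 3 n2 by auto
    then have a: "0 \<le> x t (i - 1)" "x t (i + 1) \<le> 1" using r by auto
    have "x t (i - 1) \<le> x t i" using m[of "i - 1"] 3 by auto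
    moreover have "x t i \<le> x t (i + 1)" using m[of i] 3 by auto
    ultimately have b: "x t (i - 1) \<le> x t (i + 1)" by simp
    have "i \<noteq> 1" "i \<noteq> n" using 3 n2 by auto
    then show ?thesis using amedian_char[of "x t (i - 1)" "x t (i + 1)" 1] a b 3 L(2)[OF 3] unfolding upd_def
      by auto
  qed
qed

lemma inv_all: "inv t"
proof (induction t)
  case 0 show ?case by (rule inv0)
next
  case (Suc t)
  have s: "\<forall>i\<in>{1..n}. x (Suc t) i \<in> {0..1} \<and> F (x (Suc t) i) = upd (F 1) n (\<lambda>i. F (x t i)) i"
    using step[OF Suc] .
  have r: "\<forall>i\<in>{1..n}. 0 \<le> F (x t i) \<and> F (x t i) \<le> F 1"
    using Suc F_range unfolding inv_def by blast
  have m: "\<forall>i. 1 \<le> i \<and> i < n \<longrightarrow> F (x t i) \<le> F (x t (i + 1))"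
  proof (intro allI impI)
    fix i assume "1 \<le> i \<and> i < n"
    then show "F (x t i) \<le> F (x t (i + 1))" using Suc F_mono_iff unfolding inv_def by auto
  qed
  show ?case unfolding inv_def
  proof (intro conjI allI impI)
    show "\<forall>i\<in>{1..n}. x (Suc t) i \<in> {0..1}" using s by auto
  next
    fix i assume i: "1 \<le> i \<and> i < n"
    have "upd (F 1) n (\<lambda>i. F (x t i)) i \<le> upd (F 1) n (\<lambda>i. F (x t i)) (i + 1)"
      by (rule upd_mono[OF n2 r m]) (use i in auto)
    then have "F (x (Suc t) i) \<le> F (x (Suc t) (i + 1))" using s i by auto
    moreover have "x (Suc t) i \<in> {0..1}" "x (Suc t) (i + 1) \<in> {0..1}" using s i by auto
    ultimately show "x (Suc t) i \<le> x (Suc t) (i + 1)" using F_mono_iff by blast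
  qed
qed

end




definition ub :: "real \<Rightarrow> nat \<Rightarrow> nat \<Rightarrow> real" where
  "ub L n i = (2 * real i - 1) * L / (2 * real n)"

lemma upd_err:
  assumes n: "2 \<le> n" and M: "0 \<le> M"
    and h: "\<forall>i\<in>{1..n}. \<bar>v i - ub L n i\<bar> \<le> M * w n i" and i: "i \<in> {1..n}"
  shows "\<bar>upd L n v i - ub L n i\<bar> \<le> M * ((1 - 1 / real n ^ 2) * w n i)"
proof -
  have np: "real n > 0" using n by simp
  consider "i = 1" | "i = n" | "2 \<le> i" "i \<le> n - 1" using i n by force
  then show ?thesis
  proof cases
    case 1
    have "ub L n 2 = 3 * ub L n 1" unfolding ub_def by simp
    then have e: "upd L n v i - ub L n i = (v 2 - ub L n 2) / 3" using 1 unfolding upd_def by simp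
    have "\<bar>upd L n v i - ub L n i\<bar> = \<bar>v 2 - ub L n 2\<bar> / 3" unfolding e by simp
    moreover have "\<bar>v 2 - ub L n 2\<bar> \<le> M * w n 2" using h n by auto
    ultimately have "\<bar>upd L n v i - ub L n i\<bar> \<le> M * (w n 2 / 3)" by simp
    also have "\<dots> \<le> M * ((1 - 1 / real n ^ 2) * w n 1)" by (rule mult_left_mono[OF w_end[OF n] M])
    finally show ?thesis using 1 by simp
  next
    case 2
    then have i1: "i \<noteq> 1" using n by auto
    have "ub L n n = (ub L n (n - 1) + 2 * L) / 3" unfolding ub_def using np n
      by (simp add: of_nat_diff field_simps)
    then have e: "upd L n v i - ub L n i = (v (n - 1) - ub L n (n - 1)) / 3" using 2 i1 unfolding upd_def
      by (simp add: field_simps)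
    have "\<bar>upd L n v i - ub L n i\<bar> = \<bar>v (n - 1) - ub L n (n - 1)\<bar> / 3" unfolding e by simp
    moreover have "\<bar>v (n - 1) - ub L n (n - 1)\<bar> \<le> M * w n (n - 1)" using h n by auto
    moreover have "w n (n - 1) = w n 2" using w_sym[of 2 n] n by (simp add: numeral_2_eq_2)
    moreover have "w n n = w n 1" using w_sym[of 1 n] by simp
    ultimately have "\<bar>upd L n v i - ub L n i\<bar> \<le> M * (w n 2 / 3)" by simp
    also have "\<dots> \<le> M * ((1 - 1 / real n ^ 2) * w n 1)" by (rule mult_left_mono[OF w_end[OF n] M])
    finally show ?thesis using 2 \<open>w n n = w n 1\<close> by simp
  next
    case 3
    have i1: "i \<noteq> 1" "i \<noteq> n" using 3 n by auto
    have "ub L n (i - 1) + ub L n (i + 1) = 2 * ub L n i" unfolding ub_def using 3 np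
      by (simp add: of_nat_diff field_simps)
    then have e: "upd L n v i - ub L n i = ((v (i - 1) - ub L n (i - 1)) + (v (i + 1) - ub L n (i + 1))) / 2"
      using i1 unfolding upd_def by (simp add: field_simps)
    have "\<bar>upd L n v i - ub L n i\<bar> \<le> (\<bar>v (i - 1) - ub L n (i - 1)\<bar> + \<bar>v (i + 1) - ub L n (i + 1)\<bar>) / 2"
      unfolding e by (simp add: abs_triangle_ineq)
    moreover have "i - 1 \<in> {1..n}" using 3 by auto
    then have "\<bar>v (i - 1) - ub L n (i - 1)\<bar> \<le> M * w n (i - 1)" using h by blast
    moreover have "\<bar>v (i + 1) - ub L n (i + 1)\<bar> \<le> M * w n (i + 1)" using h 3 by auto
    ultimately have "\<bar>upd L n v i - ub L n i\<bar> \<le> M * ((w n (i - 1) + w n (i + 1)) / 2)"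
      by (simp add: field_simps)
    also have "\<dots> \<le> M * ((1 - 1 / real n ^ 2) * w n i)"
      using w_mid_contr[of i n] 3 n M by (intro mult_left_mono) auto
    finally show ?thesis .
  qed
qed




context dyn begin

abbreviation "lam \<equiv> 1 - 1 / real n ^ 2"
abbreviation "K \<equiv> 4 * F 1 / (3 * real n ^ 2)"

lemma ub_range: "i \<in> {1..n} \<Longrightarrow> 0 \<le> ub (F 1) n i \<and> ub (F 1) n i \<le> F 1"
proof -
  assume i: "i \<in> {1..n}"
  have F1: "0 < F 1" using F1_bounds rmin_pos by linarith
  have r: "1 \<le> real i" "real i \<le> real n" using i by auto
  have "0 \<le> (2 * real i - 1) * F 1" using r F1 by simp
  moreover have "(2 * real i - 1) * F 1 \<le> (2 * real n) * F 1" using r F1 by (intro mult_right_mono) auto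
  ultimately show ?thesis unfolding ub_def using r by (auto simp: field_simps)
qed

lemma lam_range: "0 \<le> lam" "lam < 1"
proof -
  have np: "1 \<le> real n ^ 2" using n2 by (simp add: one_le_power)
  then have "1 / real n ^ 2 \<le> 1" using n2 by (simp add: divide_le_eq)
  then show "0 \<le> lam" by simp
  show "lam < 1" using n2 by simp
qed

lemma err_bound: "\<forall>i\<in>{1..n}. \<bar>F (x t i) - ub (F 1) n i\<bar> \<le> K * lam ^ t * w n i"
proof (induction t)
  case 0
  show ?case
  proof
    fix i assume i: "i \<in> {1..n}"
    have a: "0 \<le> F (x 0 i) \<and> F (x 0 i) \<le> F 1" using inv0 i F_range unfolding inv_def by blast
    have b: "0 \<le> ub (F 1) n i \<and> ub (F 1) n i \<le> F 1" using ub_range[OF i] .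
    have F1: "0 < F 1" using F1_bounds rmin_pos by linarith
    have np: "0 < real n ^ 2" using n2 by simp
    have "3 / 4 * real n ^ 2 \<le> w n i" using w_bounds i by auto
    then have "K * (3 / 4 * real n ^ 2) \<le> K * w n i" using F1 np by (intro mult_left_mono) auto
    moreover have "K * (3 / 4 * real n ^ 2) = F 1" using np by (simp add: field_simps)
    ultimately show "\<bar>F (x 0 i) - ub (F 1) n i\<bar> \<le> K * lam ^ 0 * w n i" using a b by auto
  qed
next
  case (Suc t)
  have F1: "0 < F 1" using F1_bounds rmin_pos by linarith
  have M: "0 \<le> K * lam ^ t" using F1 lam_range by simp
  have s: "\<forall>i\<in>{1..n}. x (Suc t) i \<in> {0..1} \<and> F (x (Suc t) i) = upd (F 1) n (\<lambda>i. F (x t i)) i"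
    using step[OF inv_all] .
  show ?case
  proof
    fix i assume i: "i \<in> {1..n}"
    have u: "\<bar>upd (F 1) n (\<lambda>i. F (x t i)) i - ub (F 1) n i\<bar> \<le> (K * lam ^ t) * (lam * w n i)"
      by (rule upd_err[OF n2 M _ i]) (use Suc in auto)
    have eq: "K * lam ^ Suc t * w n i = (K * lam ^ t) * (lam * w n i)" by (simp only: power_Suc mult_ac)
    have f: "F (x (Suc t) i) = upd (F 1) n (\<lambda>i. F (x t i)) i" using s i by auto
    show "\<bar>F (x (Suc t) i) - ub (F 1) n i\<bar> \<le> K * lam ^ Suc t * w n i"
      unfolding f eq by (rule u)
  qed
qed

definition xbar where "xbar i = (SOME c. 0 \<le> c \<and> c \<le> 1 \<and> F c = ub (F 1) n i)"

lemma xbar_prop: "i \<in> {1..n} \<Longrightarrow> xbar i \<in> {0..1} \<and> F (xbar i) = ub (F 1) n i"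
proof -
  assume i: "i \<in> {1..n}"
  have "\<exists>c. 0 \<le> c \<and> c \<le> 1 \<and> F c = ub (F 1) n i"
    using F_ivt[of 0 1 "ub (F 1) n i"] ub_range[OF i] F0 by auto
  then show ?thesis unfolding xbar_def by (metis (mono_tags, lifting) atLeastAtMost_iff someI_ex)
qed

lemma x_bound: "i \<in> {1..n} \<Longrightarrow> \<bar>x t i - xbar i\<bar> \<le> 4 / 3 * (rmax / rmin) * lam ^ t"
proof -
  assume i: "i \<in> {1..n}"
  have F1: "0 < F 1" using F1_bounds rmin_pos by linarith
  have np: "0 < real n ^ 2" using n2 by simp
  have xi: "x t i \<in> {0..1}" using inv_all i unfolding inv_def by blast
  have "\<bar>x t i - xbar i\<bar> \<le> \<bar>F (x t i) - F (xbar i)\<bar> / rmin" using x_diff xi xbar_prop[OF i] by blast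
  also have "\<bar>F (x t i) - F (xbar i)\<bar> \<le> K * lam ^ t * w n i" using err_bound xbar_prop[OF i] i by auto
  also have "K * lam ^ t * w n i \<le> K * lam ^ t * real n ^ 2"
    using w_bounds(2)[of i n] i F1 lam_range by (intro mult_left_mono) auto
  also have "\<dots> = 4 / 3 * F 1 * lam ^ t" using np by (simp add: field_simps)
  also have "\<dots> \<le> 4 / 3 * rmax * lam ^ t" using F1_bounds lam_range by (intro mult_right_mono) auto
  finally show ?thesis using rmin_pos by (simp add: divide_right_mono field_simps)
qed

end




context dens begin

lemma cov_img: fixes n :: nat and x :: "nat \<Rightarrow> real" assumes "y \<in> {0..1}" "\<forall>i\<in>{1..n}. x i \<in> {0..1}"
  shows "(\<lambda>i. dist_rho \<rho> y (x i)) ` {1..n} = (\<lambda>i. \<bar>F y - F (x i)\<bar>) ` {1..n}"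
  using assms dist_rho_eq by (intro image_cong) auto

lemma cov_bdd: fixes n :: nat and x :: "nat \<Rightarrow> real" assumes "1 \<le> n" "\<forall>i\<in>{1..n}. x i \<in> {0..1}"
  shows "bdd_above ((\<lambda>y. Min ((\<lambda>i. dist_rho \<rho> y (x i)) ` {1..n})) ` {0..1})"
proof (rule bdd_aboveI2)
  fix y :: real assume y: "y \<in> {0..1}"
  have "Min ((\<lambda>i. dist_rho \<rho> y (x i)) ` {1..n}) \<le> dist_rho \<rho> y (x 1)"
    apply (rule Min_le)
     apply simp
    using assms(1) by (intro imageI) auto
  also have "\<dots> = \<bar>F y - F (x 1)\<bar>" using dist_rho_eq y assms by auto
  also have "\<dots> \<le> F 1"
  proof -
    have "x 1 \<in> {0..1}" using assms by auto
    then show ?thesis using F_range[of y] F_range[of "x 1"] y by (auto simp: abs_le_iff)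
  qed
  finally show "Min ((\<lambda>i. dist_rho \<rho> y (x i)) ` {1..n}) \<le> F 1" .
qed

lemma cov_ge: assumes n: "1 \<le> n" and xr: "\<forall>i\<in>{1..n}. x i \<in> {0..1}"
  shows "F 1 / (2 * real n) \<le> coverage n x \<rho>"
proof -
  define r where "r = F 1 / (2 * real n)"
  have F1: "0 < F 1" using F1_bounds rmin_pos by linarith
  have np: "0 < real n" using n by simp
  define p where "p k = real k * F 1 / real n" for k :: nat
  have "\<exists>k\<in>{0..n}. \<forall>i\<in>{1..n}. r \<le> \<bar>p k - F (x i)\<bar>"
  proof (rule ccontr)
    assume "\<not> ?thesis"
    then have "\<forall>k\<in>{0..n}. \<exists>i\<in>{1..n}. \<bar>p k - F (x i)\<bar> < r" by (auto simp: not_le)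
    then obtain f where f: "\<And>k. k \<in> {0..n} \<Longrightarrow> f k \<in> {1..n} \<and> \<bar>p k - F (x (f k))\<bar> < r"
      by metis
    have "inj_on f {0..n}"
    proof (rule inj_onI)
      fix j k assume jk: "j \<in> {0..n}" "k \<in> {0..n}" "f j = f k"
      have "\<bar>p j - p k\<bar> < 2 * r" using f[OF jk(1)] f[OF jk(2)] jk(3) by auto
      moreover have "p j - p k = (real j - real k) * (F 1 / real n)" unfolding p_def using np by (simp add: field_simps)
      then have "\<bar>p j - p k\<bar> = \<bar>real j - real k\<bar> * (F 1 / real n)" using F1 np by (simp add: abs_mult)
      moreover have "2 * r = F 1 / real n" unfolding r_def by simp
      ultimately have "\<bar>real j - real k\<bar> * (F 1 / real n) < 1 * (F 1 / real n)" by simp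
      then have "\<bar>real j - real k\<bar> < 1" using F1 np by (subst (asm) mult_less_cancel_right) auto
      then show "j = k" by linarith
    qed
    moreover have "f ` {0..n} \<subseteq> {1..n}" using f by auto
    ultimately have "card {0..n} \<le> card {1..n}" by (intro card_inj_on_le) auto
    then show False by simp
  qed
  then obtain k where k: "k \<in> {0..n}" "\<forall>i\<in>{1..n}. r \<le> \<bar>p k - F (x i)\<bar>" by blast
  have pk: "0 \<le> p k" "p k \<le> F 1" unfolding p_def using k F1 np by (auto simp: field_simps)
  obtain y where y: "0 \<le> y" "y \<le> 1" "F y = p k" using F_ivt[of 0 1 "p k"] pk F0 by auto
  have yin: "y \<in> {0..1}" using y by auto
  have "r \<le> Min ((\<lambda>i. dist_rho \<rho> y (x i)) ` {1..n})"
    unfolding cov_img[OF yin xr] using y k n by auto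
  also have "\<dots> \<le> coverage n x \<rho>" unfolding coverage_def
    by (rule cSUP_upper[OF _ cov_bdd[OF n xr]]) (use y in auto)
  finally show ?thesis unfolding r_def .
qed

lemma cov_opt: assumes n: "1 \<le> n" and xr: "\<forall>i\<in>{1..n}. xb i \<in> {0..1} \<and> F (xb i) = ub (F 1) n i"
  shows "coverage n xb \<rho> = F 1 / (2 * real n)"
proof (rule antisym)
  define r where "r = F 1 / (2 * real n)"
  have F1: "0 < F 1" using F1_bounds rmin_pos by linarith
  have np: "0 < real n" using n by simp
  have xr': "\<forall>i\<in>{1..n}. xb i \<in> {0..1}" using xr by auto
  show "F 1 / (2 * real n) \<le> coverage n xb \<rho>" by (rule cov_ge[OF n xr'])
  show "coverage n xb \<rho> \<le> F 1 / (2 * real n)" unfolding coverage_def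
  proof (rule cSUP_least)
    fix y :: real assume y: "y \<in> {0..1}"
    define s where "s = F y * real n / F 1"
    have s: "0 \<le> s" "s \<le> real n" unfolding s_def using F_range[OF y] F1 np by (auto simp: field_simps)
    obtain i where i: "i \<in> {1..n}" "real i - 1 \<le> s" "s \<le> real i"
    proof (cases "s = 0")
      case True then show ?thesis using that[of 1] n by auto
    next
      case False
      then have sp: "0 < s" using s by auto
      define i where "i = nat \<lceil>s\<rceil>"
      have c0: "0 < \<lceil>s\<rceil>" using sp by simp
      have ri: "real i = of_int \<lceil>s\<rceil>" unfolding i_def using c0 by auto
      have c1: "of_int \<lceil>s\<rceil> - 1 < s" "s \<le> of_int \<lceil>s\<rceil>" by linarith+
      have c2: "\<lceil>s\<rceil> \<le> int n" using s by (simp add: ceiling_le_iff)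
      have "1 \<le> i" unfolding i_def using c0 by arith
      moreover have "i \<le> n" unfolding i_def using c2 by arith
      ultimately have "i \<in> {1..n}" by auto
      moreover have "real i - 1 \<le> s" "s \<le> real i" using ri c1 by auto
      ultimately show ?thesis using that by blast
    qed
    have "Min ((\<lambda>i. dist_rho \<rho> y (xb i)) ` {1..n}) \<le> dist_rho \<rho> y (xb i)"
      apply (rule Min_le)
       apply simp
      using i(1) by (intro imageI) auto
    also have "\<dots> = \<bar>F y - ub (F 1) n i\<bar>" using dist_rho_eq y xr i by auto
    also have "F y - ub (F 1) n i = (2 * s - 2 * real i + 1) * r"
      unfolding s_def r_def ub_def using F1 np by (simp add: field_simps)
    also have "\<bar>(2 * s - 2 * real i + 1) * r\<bar> = \<bar>2 * s - 2 * real i + 1\<bar> * r"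
      using F1 np unfolding r_def by (simp add: abs_mult)
    also have "\<dots> \<le> 1 * r" using i F1 np unfolding r_def by (intro mult_right_mono) auto
    finally show "Min ((\<lambda>i. dist_rho \<rho> y (xb i)) ` {1..n}) \<le> F 1 / (2 * real n)" unfolding r_def by simp
  qed auto
qed

lemma opt_cov: assumes n: "1 \<le> n" and xr: "\<forall>i\<in>{1..n}. xb i \<in> {0..1} \<and> F (xb i) = ub (F 1) n i"
  shows "opt_coverage n \<rho> = coverage n xb \<rho>"
  unfolding opt_coverage_def
proof (rule antisym)
  show "(INF x\<in>{x. \<forall>i\<in>{1..n}. x i \<in> {0..1}}. coverage n x \<rho>) \<le> coverage n xb \<rho>"
    by (rule cINF_lower) (use cov_ge[OF n] xr in \<open>auto intro!: bdd_belowI2\<close>)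
  show "coverage n xb \<rho> \<le> (INF x\<in>{x. \<forall>i\<in>{1..n}. x i \<in> {0..1}}. coverage n x \<rho>)"
    unfolding cov_opt[OF n xr] by (rule cINF_greatest) (use cov_ge[OF n] xr in auto)
qed

end




context dyn begin

lemma eps_bound:
  assumes e: "0 < \<epsilon>" "\<epsilon> \<le> 1" and t: "real t \<ge> 1 * real n ^ 2 * ln (real n / \<epsilon> * (rmax / rmin))"
    and i: "i \<in> {1..n}"
  shows "\<bar>x t i - xbar i\<bar> \<le> \<epsilon>"
proof -
  define Q where "Q = real n / \<epsilon> * (rmax / rmin)"
  have np: "0 < real n ^ 2" using n2 by simp
  have rr: "0 < rmax / rmin" using rmin_le rmin_pos by simp
  have Qp: "0 < Q" unfolding Q_def using e n2 rr by (intro mult_pos_pos divide_pos_pos) (use rmin_pos rmin_le in auto)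
  have "lam \<le> exp (- 1 / real n ^ 2)" using exp_ge_add_one_self[of "- 1 / real n ^ 2"] by simp
  then have "lam ^ t \<le> exp (- 1 / real n ^ 2) ^ t" using lam_range by (intro power_mono) auto
  also have "\<dots> = exp (real t * (- 1 / real n ^ 2))" by (rule exp_of_nat_mult[symmetric])
  also have "\<dots> \<le> exp (- ln Q)"
  proof -
    have "ln Q \<le> real t / real n ^ 2" using t np unfolding Q_def by (simp add: field_simps)
    then show ?thesis by simp
  qed
  also have "\<dots> = 1 / Q" using Qp by (simp add: exp_minus')
  finally have lt: "lam ^ t \<le> 1 / Q" .
  have "\<bar>x t i - xbar i\<bar> \<le> 4 / 3 * (rmax / rmin) * lam ^ t" by (rule x_bound[OF i])
  also have "\<dots> \<le> 4 / 3 * (rmax / rmin) * (1 / Q)" using lt rr by (intro mult_left_mono) auto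
  also have "\<dots> = 4 / 3 * \<epsilon> / real n" unfolding Q_def using rr e n2 rmin_pos by (simp add: field_simps)
  also have "\<dots> \<le> \<epsilon>" using e n2 by (simp add: field_simps)
  finally show ?thesis .
qed

lemma conv: assumes i: "i \<in> {1..n}" shows "(\<lambda>t. x t i) \<longlonglongrightarrow> xbar i"
proof (rule LIMSEQ_I)
  fix r :: real assume r: "0 < r"
  define \<epsilon> where "\<epsilon> = min (r / 2) 1"
  have e: "0 < \<epsilon>" "\<epsilon> \<le> 1" "\<epsilon> < r" unfolding \<epsilon>_def using r by auto
  define N where "N = nat \<lceil>1 * real n ^ 2 * ln (real n / \<epsilon> * (rmax / rmin))\<rceil>"
  show "\<exists>no. \<forall>t\<ge>no. norm (x t i - xbar i) < r"
  proof (intro exI allI impI)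
    fix t assume "N \<le> t"
    then have "real t \<ge> 1 * real n ^ 2 * ln (real n / \<epsilon> * (rmax / rmin))"
      unfolding N_def by linarith
    then have "\<bar>x t i - xbar i\<bar> \<le> \<epsilon>" using eps_bound e i by blast
    then show "norm (x t i - xbar i) < r" using e by simp
  qed
qed

end




theorem theorem1:
  shows "\<exists>C>0. \<forall>(n::nat) (\<rho>::real \<Rightarrow> real) (\<rho>min::real) (\<rho>max::real) (x::nat \<Rightarrow> nat \<Rightarrow> real).
     n \<ge> 2 \<and> piecewise_continuous_on 0 1 \<rho> \<and> 0 < \<rho>min \<and>
     (\<forall>z\<in>{0..1}. \<rho>min \<le> \<rho> z \<and> \<rho> z \<le> \<rho>max) \<and>
     0 \<le> x 0 1 \<and> (\<forall>i. 1 \<le> i \<and> i < n \<longrightarrow> x 0 i \<le> x 0 (i + 1)) \<and> x 0 n \<le> 1 \<and>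
     coverage_law n \<rho> x
     \<longrightarrow> (\<exists>xbar::nat \<Rightarrow> real.
            (\<forall>i\<in>{1..n}. (\<lambda>t. x t i) \<longlonglongrightarrow> xbar i) \<and>
            coverage n xbar \<rho> = opt_coverage n \<rho> \<and>
            (\<forall>\<epsilon>. 0 < \<epsilon> \<and> \<epsilon> \<le> 1 \<longrightarrow>
               (\<forall>t::nat. real t \<ge> C * real n ^ 2 * ln (real n / \<epsilon> * (\<rho>max / \<rho>min)) \<longrightarrow>
                  (\<forall>i\<in>{1..n}. \<bar>x t i - xbar i\<bar> \<le> \<epsilon>))))"
proof (rule exI[of _ 1], intro conjI allI impI)
  fix n :: nat and \<rho> :: "real \<Rightarrow> real" and \<rho>min \<rho>max :: real and x :: "nat \<Rightarrow> nat \<Rightarrow> real"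
  assume H: "n \<ge> 2 \<and> piecewise_continuous_on 0 1 \<rho> \<and> 0 < \<rho>min \<and>
     (\<forall>z\<in>{0..1}. \<rho>min \<le> \<rho> z \<and> \<rho> z \<le> \<rho>max) \<and>
     0 \<le> x 0 1 \<and> (\<forall>i. 1 \<le> i \<and> i < n \<longrightarrow> x 0 i \<le> x 0 (i + 1)) \<and> x 0 n \<le> 1 \<and>
     coverage_law n \<rho> x"
  have integ: "\<rho> integrable_on {0..1}" using pc_integrable H by blast
  interpret dyn \<rho> \<rho>min \<rho>max n x
    by unfold_locales (use H integ in auto)
  show "\<exists>xbar::nat \<Rightarrow> real.
            (\<forall>i\<in>{1..n}. (\<lambda>t. x t i) \<longlonglongrightarrow> xbar i) \<and>
            coverage n xbar \<rho> = opt_coverage n \<rho> \<and>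
            (\<forall>\<epsilon>. 0 < \<epsilon> \<and> \<epsilon> \<le> 1 \<longrightarrow>
               (\<forall>t::nat. real t \<ge> 1 * real n ^ 2 * ln (real n / \<epsilon> * (\<rho>max / \<rho>min)) \<longrightarrow>
                  (\<forall>i\<in>{1..n}. \<bar>x t i - xbar i\<bar> \<le> \<epsilon>)))"
  proof (intro exI[of _ xbar] conjI ballI allI impI)
    show "\<And>i. i \<in> {1..n} \<Longrightarrow> (\<lambda>t. x t i) \<longlonglongrightarrow> xbar i" by (rule conv)
    have n1: "1 \<le> n" using n2 by simp
    show "coverage n xbar \<rho> = opt_coverage n \<rho>"
    proof -
      have "\<forall>i\<in>{1..n}. xbar i \<in> {0..1} \<and> F (xbar i) = ub (F 1) n i" using xbar_prop by blast
      then show ?thesis using opt_cov[OF n1] by metis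
    qed
    show "\<And>\<epsilon> t i. 0 < \<epsilon> \<and> \<epsilon> \<le> 1 \<Longrightarrow>
       1 * real n ^ 2 * ln (real n / \<epsilon> * (\<rho>max / \<rho>min)) \<le> real t \<Longrightarrow>
       i \<in> {1..n} \<Longrightarrow> \<bar>x t i - xbar i\<bar> \<le> \<epsilon>"
      using eps_bound by blast
  qed
qed (simp)


end
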